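(* Under the same setting as follows: let $\Sigma \subset \mathbb{R}^N$ be proximinal, $A \in \mathbb{R}^{m\times N}$, $\hat{x} \in \Sigma$, $e \in \mathbb{R}^m$, $y = A\hat{x}+e$, $\mu>0$, $\lambda \in [0,1]$, $\eta \ge 0$, and $P_\Sigma$ a generalized projection onto $\Sigma$ with $\beta = \beta_\Sigma(P_\Sigma) < \infty$ such that for every $z$ and every $u \in P_\Sigma(z)$ there is $w \in P^\perp_\Sigma(z)$ with $\|u-w\|_2 \le \eta$. Let $\delta = \delta_\Sigma(\mu A^TA)$. For any $x \in \mathbb{R}^N$, any $p \in P_\Sigma(x)$, $z = (1-\lambda)x + \lambda p$ and $x^+ = z - \mu A^T(Az - y)$, we have $$\|x^+ - \hat{x}\|_2 \le \big(\delta\beta + |1-\lambda|\,\|I-\mu A^TA\|_{\mathrm{op}}\big)\|x - \hat{x}\|_2 + |1-\lambda|\,\|I-\mu A^TA\|_{\mathrm{op}}\,\eta + \mu\|A^Te\|_2.$$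
   Context: Secant set: $\Sigma - \Sigma = \{x_1 - x_2 : x_1, x_2 \in \Sigma\}$. Restricted isometry constant: for a matrix $B \in \mathbb{R}^{N\times N}$, $\delta_\Sigma(B)$ is the smallest $\delta \ge 0$ such that $\|(I-B)(x_1-x_2)\|_2 \le \delta\|x_1-x_2\|_2$ for all $x_1,x_2 \in \Sigma$. A generalized projection onto $\Sigma$ is a (set-valued) map $P$ with $P(z) \subset \Sigma$ (nonempty) for every $z \in \mathbb{R}^N$. $\Sigma$ is proximinal if $\arg\min_{x\in\Sigma}\|x-z\|_2 \neq \emptyset$ for all $z$, and then the orthogonal projection is the set-valued map $P^\perp_\Sigma(z) = \arg\min_{x\in\Sigma}\|x-z\|_2$. Restricted Lipschitz constant: $\beta_\Sigma(P)$ is the smallest $\beta$ such that $\|u - x\|_2 \le \beta\|z - x\|_2$ for all $z \in \mathbb{R}^N$, $x \in \Sigma$, $u \in P(z)$. $\|\cdot\|_{\mathrm{op}}$ is the operator norm induced by $\|\cdot\|_2$. *)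

theory Defs
  imports "HOL-Analysis.Analysis"
begin

definition orth_proj :: "(real^'n) set \<Rightarrow> real^'n \<Rightarrow> (real^'n) set" where
  "orth_proj S z = {x \<in> S. \<forall>x'\<in>S. norm (x - z) \<le> norm (x' - z)}"

definition proximinal :: "(real^'n) set \<Rightarrow> bool" where
  "proximinal S \<longleftrightarrow> (\<forall>z. orth_proj S z \<noteq> {})"

definition gen_proj :: "(real^'n) set \<Rightarrow> (real^'n \<Rightarrow> (real^'n) set) \<Rightarrow> bool" where
  "gen_proj S P \<longleftrightarrow> (\<forall>z. P z \<subseteq> S \<and> P z \<noteq> {})"

definition ric :: "(real^'n) set \<Rightarrow> real^'n^'n \<Rightarrow> real" where
  "ric S B = Inf {d. d \<ge> 0 \<and> (\<forall>x1\<in>S. \<forall>x2\<in>S.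
      norm ((mat 1 - B) *v (x1 - x2)) \<le> d * norm (x1 - x2))}"

definition rlip_set :: "(real^'n) set \<Rightarrow> (real^'n \<Rightarrow> (real^'n) set) \<Rightarrow> real set" where
  "rlip_set S P = {b. \<forall>z. \<forall>x\<in>S. \<forall>u\<in>P z. norm (u - x) \<le> b * norm (z - x)}"

definition rlip :: "(real^'n) set \<Rightarrow> (real^'n \<Rightarrow> (real^'n) set) \<Rightarrow> real" where
  "rlip S P = Inf (rlip_set S P)"

end

theory Submission
  imports Defs
begin

lemma inf_bound:
  fixes D :: "real set"
  assumes "D \<noteq> {}" "\<And>d. d \<in> D \<Longrightarrow> 0 \<le> d" "\<And>d. d \<in> D \<Longrightarrow> a \<le> d * n" "0 \<le> n"
  shows "a \<le> Inf D * n"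
proof (cases "n = 0")
  case True
  then show ?thesis using assms by fastforce
next
  case False
  then have n: "n > 0" using assms by simp
  have "a / n \<le> Inf D"
  proof (rule cInf_greatest[OF assms(1)])
    fix d assume "d \<in> D" then show "a / n \<le> d" using assms(3) n by (simp add: divide_le_eq)
  qed
  then show ?thesis using n by (simp add: divide_le_eq)
qed

lemma inf_nonneg:
  fixes D :: "real set"
  assumes "D \<noteq> {}" "\<And>d. d \<in> D \<Longrightarrow> 0 \<le> d"
  shows "0 \<le> Inf D"
  using assms by (meson cInf_greatest)

theorem mainTheorem2:
  fixes S :: "(real^'n) set" and A :: "real^'n^'m" and xhat x p :: "real^'n"
    and e :: "real^'m" and mu lam eta :: real and P :: "real^'n \<Rightarrow> (real^'n) set"
  assumes "proximinal S" and "xhat \<in> S" and "mu > 0" and "0 \<le> lam" and "lam \<le> 1"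
    and "eta \<ge> 0" and "gen_proj S P" and "rlip_set S P \<noteq> {}"
    and "\<forall>z. \<forall>u\<in>P z. \<exists>w\<in>orth_proj S z. norm (u - w) \<le> eta"
    and "p \<in> P x"
  shows "let y = A *v xhat + e;
             M = mu *\<^sub>R (transpose A ** A);
             \<delta> = ric S M; \<beta> = rlip S P;
             L = onorm (\<lambda>v. (mat 1 - M) *v v);
             z = (1 - lam) *\<^sub>R x + lam *\<^sub>R p;
             xp = z - mu *\<^sub>R (transpose A *v (A *v z - y))
         in norm (xp - xhat) \<le> (\<delta> * \<beta> + \<bar>1 - lam\<bar> * L) * norm (x - xhat)
              + \<bar>1 - lam\<bar> * L * eta + mu * norm (transpose A *v e)"
proof -
  define M where "M = mu *\<^sub>R (transpose A ** A)"
  define \<delta> where "\<delta> = ric S M"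
  define \<beta> where "\<beta> = rlip S P"
  define L where "L = onorm (\<lambda>v. (mat 1 - M) *v v)"
  define z where "z = (1 - lam) *\<^sub>R x + lam *\<^sub>R p"
  define xp where "xp = z - mu *\<^sub>R (transpose A *v (A *v z - (A *v xhat + e)))"
  have bl: "bounded_linear (\<lambda>v. (mat 1 - M) *v v)" by simp
  have Lb: "\<And>v. norm ((mat 1 - M) *v v) \<le> L * norm v"
    unfolding L_def using onorm[OF bl] by blast
  have L0: "0 \<le> L" unfolding L_def using onorm_pos_le[OF bl] .
  have Mv: "\<And>v. M *v v = mu *\<^sub>R (transpose A *v (A *v v))"
    unfolding M_def by (simp add: scaleR_matrix_vector_assoc matrix_vector_mul_assoc)
  have xp_eq: "xp - xhat = (mat 1 - M) *v (p - xhat) + (1 - lam) *\<^sub>R ((mat 1 - M) *v (x - p))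
      + mu *\<^sub>R (transpose A *v e)"
    unfolding xp_def z_def
    by (simp add: matrix_vector_mult_diff_rdistrib Mv algebra_simps)
  define Dset where "Dset = {d. d \<ge> 0 \<and> (\<forall>x1\<in>S. \<forall>x2\<in>S.
      norm ((mat 1 - M) *v (x1 - x2)) \<le> d * norm (x1 - x2))}"
  have LD: "L \<in> Dset" unfolding Dset_def using L0 Lb by auto
  have pS: "p \<in> S" using assms(7,10) unfolding gen_proj_def by blast
  have d1: "norm ((mat 1 - M) *v (p - xhat)) \<le> \<delta> * norm (p - xhat)"
    unfolding \<delta>_def ric_def Dset_def[symmetric]
    by (rule inf_bound) (use LD pS assms(2) in \<open>auto simp: Dset_def\<close>)
  have d0: "0 \<le> \<delta>" unfolding \<delta>_def ric_def Dset_def[symmetric]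
    by (rule inf_nonneg) (use LD in \<open>auto simp: Dset_def\<close>)
  have bpos: "0 \<le> b" if "b \<in> rlip_set S P" for b
  proof -
    obtain v :: "real^'n" where v: "norm v = 1" using vector_choose_size[of 1] by auto
    obtain u where u: "u \<in> P (xhat + v)" using assms(7) unfolding gen_proj_def by blast
    have "norm (u - xhat) \<le> b * norm (xhat + v - xhat)"
      using that assms(2) u unfolding rlip_set_def by blast
    then show ?thesis using v by simp (meson norm_ge_zero order_trans)
  qed
  have b1: "norm (p - xhat) \<le> \<beta> * norm (x - xhat)"
    unfolding \<beta>_def rlip_def
    by (rule inf_bound) (use assms(8,2,10) bpos in \<open>auto simp: rlip_set_def\<close>)
  obtain w where w: "w \<in> orth_proj S x" "norm (p - w) \<le> eta" using assms(9,10) by blast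
  have "norm (w - x) \<le> norm (xhat - x)" using w(1) assms(2) unfolding orth_proj_def by blast
  then have xp_b: "norm (x - p) \<le> norm (x - xhat) + eta"
    using w(2) norm_triangle_ineq[of "x - w" "w - p"]
    by (simp add: norm_minus_commute)
  have t1: "norm ((mat 1 - M) *v (p - xhat)) \<le> \<delta> * \<beta> * norm (x - xhat)"
    using d1 mult_left_mono[OF b1 d0] by (simp add: mult.assoc)
  have t2: "norm ((1 - lam) *\<^sub>R ((mat 1 - M) *v (x - p))) \<le> \<bar>1 - lam\<bar> * (L * (norm (x - xhat) + eta))"
  proof -
    have "norm ((mat 1 - M) *v (x - p)) \<le> L * (norm (x - xhat) + eta)"
      using Lb[of "x - p"] mult_left_mono[OF xp_b L0] by linarith
    then show ?thesis by (simp add: mult_left_mono)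
  qed
  have t3: "norm (mu *\<^sub>R (transpose A *v e)) = mu * norm (transpose A *v e)"
    using assms(3) by simp
  have "norm (xp - xhat) \<le> \<delta> * \<beta> * norm (x - xhat) + \<bar>1 - lam\<bar> * (L * (norm (x - xhat) + eta))
      + mu * norm (transpose A *v e)"
    unfolding xp_eq using t1 t2 t3 norm_triangle_le
    by (smt (verit, ccfv_threshold) norm_triangle_ineq)
  then show ?thesis
    unfolding Let_def M_def[symmetric] \<delta>_def[symmetric] \<beta>_def[symmetric] L_def[symmetric]
      z_def[symmetric] xp_def[symmetric]
    by (simp add: algebra_simps)
qed

end
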